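(* Let $(A,C,k)$ be an approval-based multiwinner instance with $n$ voters, and let $W \subseteq C$ be an affordable committee. Then $\mathrm{cov}(W) \ge \frac{|W|}{k}\, n$.
   Context: An instance $(A,C,k)$ consists of a finite nonempty candidate set $C$, voters $N=\{1,\dots,n\}$ with $n\ge 1$, an approval set $A_i\subseteq C$ for each voter $i$, and a committee size $k$ with $1\le k\le |C|$. For $c\in C$ let $N_c=\{i\in N: c\in A_i\}$. A committee is a set $W\subseteq C$ with $|W|\le k$. The coverage is $\mathrm{cov}(W)=|\{i\in N: A_i\cap W\neq\emptyset\}|$. A payment system assigns to each voter $i$ a function $p_i:C\to\mathbb{R}_{\ge 0}$. A committee $W$ is affordable if there is a payment system with: (C1) $p_i(c)=0$ whenever $c\notin A_i$; (C2) $\sum_{c\in C}p_i(c)\le k/n$ for every $i\in N$; (C3) $\sum_{i\in N}p_i(c)=1$ for every $c\in W$; (C4) $\sum_{i\in N}p_i(c)=0$ for every $c\notin W$. *)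

theory Defs
  imports Main "HOL.Real"
begin

definition voters :: "nat \<Rightarrow> nat set" where
  "voters n = {1..n}"

definition is_instance :: "'c set \<Rightarrow> nat \<Rightarrow> (nat \<Rightarrow> 'c set) \<Rightarrow> nat \<Rightarrow> bool" where
  "is_instance C n A k \<longleftrightarrow> finite C \<and> C \<noteq> {} \<and> n \<ge> 1 \<and>
     (\<forall>i\<in>voters n. A i \<subseteq> C) \<and> 1 \<le> k \<and> k \<le> card C"

definition is_committee :: "'c set \<Rightarrow> nat \<Rightarrow> 'c set \<Rightarrow> bool" where
  "is_committee C k W \<longleftrightarrow> W \<subseteq> C \<and> card W \<le> k"

definition cov :: "nat \<Rightarrow> (nat \<Rightarrow> 'c set) \<Rightarrow> 'c set \<Rightarrow> nat" where
  "cov n A W = card {i \<in> voters n. A i \<inter> W \<noteq> {}}"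

definition is_payment_for ::
  "'c set \<Rightarrow> nat \<Rightarrow> (nat \<Rightarrow> 'c set) \<Rightarrow> nat \<Rightarrow> 'c set \<Rightarrow> (nat \<Rightarrow> 'c \<Rightarrow> real) \<Rightarrow> bool" where
  "is_payment_for C n A k W p \<longleftrightarrow>
     (\<forall>i\<in>voters n. \<forall>c\<in>C. p i c \<ge> 0) \<and>
     (\<forall>i\<in>voters n. \<forall>c\<in>C. c \<notin> A i \<longrightarrow> p i c = 0) \<and>
     (\<forall>i\<in>voters n. (\<Sum>c\<in>C. p i c) \<le> real k / real n) \<and>
     (\<forall>c\<in>W. (\<Sum>i\<in>voters n. p i c) = 1) \<and>
     (\<forall>c\<in>C - W. (\<Sum>i\<in>voters n. p i c) = 0)"

definition affordable :: "'c set \<Rightarrow> nat \<Rightarrow> (nat \<Rightarrow> 'c set) \<Rightarrow> nat \<Rightarrow> 'c set \<Rightarrow> bool" where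
  "affordable C n A k W \<longleftrightarrow> is_committee C k W \<and> (\<exists>p. is_payment_for C n A k W p)"

end

theory Submission
  imports Defs
begin

theorem mainTheorem1:
  fixes C :: "'c set" and n k :: nat and A :: "nat \<Rightarrow> 'c set" and W :: "'c set"
  assumes "is_instance C n A k"
    and "affordable C n A k W"
  shows "real (cov n A W) \<ge> real (card W) / real k * real n"
proof -
  have fC: "finite C" and n1: "n \<ge> 1" and k1: "k \<ge> 1" using assms(1) by (auto simp: is_instance_def)
  have WC: "W \<subseteq> C" using assms(2) by (auto simp: affordable_def is_committee_def)
  obtain p where p: "is_payment_for C n A k W p" using assms(2) by (auto simp: affordable_def)
  have fW: "finite W" using fC WC finite_subset by blast
  define V where "V = voters n"
  define S where "S = {i \<in> V. A i \<inter> W \<noteq> {}}"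
  have fV: "finite V" by (simp add: V_def voters_def)
  have SV: "S \<subseteq> V" by (auto simp: S_def)
  have "real (card W) = (\<Sum>c\<in>W. \<Sum>i\<in>V. p i c)"
    using p by (simp add: is_payment_for_def V_def)
  also have "\<dots> = (\<Sum>i\<in>V. \<Sum>c\<in>W. p i c)" by (rule sum.swap)
  also have "\<dots> = (\<Sum>i\<in>S. \<Sum>c\<in>W. p i c)"
  proof -
    have z: "\<forall>i\<in>V - S. (\<Sum>c\<in>W. p i c) = 0"
    proof
      fix i assume i: "i \<in> V - S"
      have "\<forall>c\<in>W. p i c = 0"
      proof
        fix c assume c: "c \<in> W"
        then have "c \<notin> A i" "c \<in> C" "i \<in> voters n" using i WC by (auto simp: S_def V_def)
        then show "p i c = 0" using p by (simp add: is_payment_for_def)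
      qed
      then show "(\<Sum>c\<in>W. p i c) = 0" by simp
    qed
    show ?thesis using sum.mono_neutral_right[OF fV SV z] by simp
  qed
  also have "\<dots> \<le> (\<Sum>i\<in>S. real k / real n)"
  proof (rule sum_mono)
    fix i assume i: "i \<in> S"
    then have iV: "i \<in> voters n" using SV V_def by auto
    have "(\<Sum>c\<in>W. p i c) \<le> (\<Sum>c\<in>C. p i c)"
      apply (rule sum_mono2[OF fC WC])
      using p iV by (auto simp: is_payment_for_def)
    also have "\<dots> \<le> real k / real n" using p iV by (auto simp: is_payment_for_def)
    finally show "(\<Sum>c\<in>W. p i c) \<le> real k / real n" .
  qed
  also have "\<dots> = real (card S) * real k / real n" by simp
  finally have h: "real (card W) \<le> real (card S) * real k / real n" .
  have cov: "cov n A W = card S" by (simp add: cov_def S_def V_def)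
  have kp: "real k > 0" and np: "real n > 0" using n1 k1 by auto
  from h have "real (card W) * real n \<le> real (card S) * real k"
    using np by (simp add: field_simps)
  then show ?thesis using kp np cov by (simp add: field_simps)
qed

end
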